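(* On $\mathcal H=\mathbb C^2$ with orthonormal basis $|0\rangle,|1\rangle$, let $P_1=\frac12|0\rangle\langle0|$ and $P_2=\frac12|0\rangle\langle0|+|1\rangle\langle1|$. The POVM $\{P_1,P_2\}$ is not extremal, while the instrument $\mathcal N_i(\rho)=\sqrt{P_i}\,\rho\,\sqrt{P_i}$, $i=1,2$, is an extremal instrument.
   Context: A POVM is a family of positive operators summing to the identity; an extremal POVM is an extreme point of the convex set of POVMs with the same number of outcomes. An instrument with $M$ outcomes is a family of completely positive maps $\mathcal N_i:\mathcal L(\mathcal H)\to\mathcal L(\mathcal H)$ whose sum is trace preserving; extremal means an extreme point of the convex set of all such instruments with $M$ outcomes. *)

theory Defs
  imports "HOL-Analysis.Analysis"
begin

text \<open>Operators on H = C^2 are 2x2 complex matrices of type complex^2^2,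
  the basis vectors |0>, |1> are indexed by (0::2), (1::2).\<close>

type_synonym op2 = "complex^2^2"

definition ketbra :: "2 \<Rightarrow> op2" where
  "ketbra k = (\<chi> i j. if i = k \<and> j = k then 1 else 0)"

definition cscale :: "complex \<Rightarrow> op2 \<Rightarrow> op2" where
  "cscale c A = (\<chi> i j. c * A $ i $ j)"

definition qform :: "op2 \<Rightarrow> complex^2 \<Rightarrow> complex" where
  "qform A x = (\<Sum>i\<in>UNIV. \<Sum>j\<in>UNIV. cnj (x $ i) * A $ i $ j * x $ j)"

definition positive_op :: "op2 \<Rightarrow> bool" where
  "positive_op A \<longleftrightarrow> (\<forall>x. qform A x \<in> \<real> \<and> Re (qform A x) \<ge> 0)"

definition op_sqrt :: "op2 \<Rightarrow> op2" where
  "op_sqrt A = (THE B. positive_op B \<and> B ** B = A)"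

definition is_povm :: "nat \<Rightarrow> (nat \<Rightarrow> op2) \<Rightarrow> bool" where
  "is_povm M P \<longleftrightarrow> (\<forall>i\<in>{1..M}. positive_op (P i)) \<and> (\<Sum>i\<in>{1..M}. P i) = mat 1"

definition extremal_povm :: "nat \<Rightarrow> (nat \<Rightarrow> op2) \<Rightarrow> bool" where
  "extremal_povm M P \<longleftrightarrow> is_povm M P \<and>
     (\<forall>Q R (t::real). is_povm M Q \<and> is_povm M R \<and> 0 < t \<and> t < 1 \<and>
        (\<forall>i\<in>{1..M}. P i = t *\<^sub>R Q i + (1 - t) *\<^sub>R R i)
        \<longrightarrow> (\<forall>i\<in>{1..M}. Q i = P i \<and> R i = P i))"

definition clinear_map :: "(op2 \<Rightarrow> op2) \<Rightarrow> bool" where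
  "clinear_map N \<longleftrightarrow> (\<forall>A B c. N (A + B) = N A + N B \<and> N (cscale c A) = cscale c (N A))"

text \<open>Positivity of a k x k block operator matrix [X a b] (a,b < k) in M_k(L(H)) = L(C^k (x) H).\<close>
definition block_positive :: "nat \<Rightarrow> (nat \<Rightarrow> nat \<Rightarrow> op2) \<Rightarrow> bool" where
  "block_positive k X \<longleftrightarrow> (\<forall>v :: nat \<Rightarrow> complex^2.
     (\<Sum>a<k. \<Sum>b<k. \<Sum>i\<in>UNIV. \<Sum>j\<in>UNIV. cnj (v a $ i) * X a b $ i $ j * v b $ j) \<in> \<real> \<and>
     Re (\<Sum>a<k. \<Sum>b<k. \<Sum>i\<in>UNIV. \<Sum>j\<in>UNIV. cnj (v a $ i) * X a b $ i $ j * v b $ j) \<ge> 0)"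

text \<open>Completely positive: linear and id_k (x) N positive for every k.\<close>
definition completely_positive :: "(op2 \<Rightarrow> op2) \<Rightarrow> bool" where
  "completely_positive N \<longleftrightarrow> clinear_map N \<and>
     (\<forall>k X. block_positive k X \<longrightarrow> block_positive k (\<lambda>a b. N (X a b)))"

definition is_instrument :: "nat \<Rightarrow> (nat \<Rightarrow> op2 \<Rightarrow> op2) \<Rightarrow> bool" where
  "is_instrument M N \<longleftrightarrow> (\<forall>i\<in>{1..M}. completely_positive (N i)) \<and>
     (\<forall>\<rho>. trace (\<Sum>i\<in>{1..M}. N i \<rho>) = trace \<rho>)"

definition extremal_instrument :: "nat \<Rightarrow> (nat \<Rightarrow> op2 \<Rightarrow> op2) \<Rightarrow> bool" where
  "extremal_instrument M N \<longleftrightarrow> is_instrument M N \<and>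
     (\<forall>Q R (t::real). is_instrument M Q \<and> is_instrument M R \<and> 0 < t \<and> t < 1 \<and>
        (\<forall>i\<in>{1..M}. N i = (\<lambda>\<rho>. t *\<^sub>R Q i \<rho> + (1 - t) *\<^sub>R R i \<rho>))
        \<longrightarrow> (\<forall>i\<in>{1..M}. Q i = N i \<and> R i = N i))"

end

theory Submission
  imports Defs
begin


lemma U2: "(UNIV::2 set) = {0,1}" using exhaust_2 by (metis (full_types) UNIV_2 insert_commute zero_neq_one) 
lemma sum2: "sum f (UNIV::2 set) = f 0 + f 1" by (simp add: U2)
lemma all2: "(\<forall>i::2. P i) \<longleftrightarrow> P 0 \<and> P 1" by (metis U2 UNIV_I insertE singletonD)
lemma ex2: "(i::2) = 0 \<or> i = 1" using U2 by auto
lemma sumlt2: "(\<Sum>a<(2::nat). f a) = f 0 + f 1" by (simp add: numeral_2_eq_2)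

lemma pair_form_gen:
  assumes bp: "block_positive 2 X"
  shows "(\<Sum>a<2. \<Sum>b<2. \<Sum>i\<in>UNIV. \<Sum>j\<in>UNIV. cnj (v a $ i) * X a b $ i $ j * v b $ j) \<in> \<real> \<and>
      Re (\<Sum>a<2. \<Sum>b<2. \<Sum>i\<in>UNIV. \<Sum>j\<in>UNIV. cnj (v a $ i) * X a b $ i $ j * v b $ j) \<ge> 0"
  using bp unfolding block_positive_def by blast

lemma test:
  assumes bp: "block_positive 2 X" 
  shows "(cnj x * X 0 0 $0$0 * x + cnj x * X 0 1 $ 0 $ 1 * y + cnj y * X 1 0 $ 1 $ 0 * x + cnj y * X 1 1 $ 1 $ 1 * y) \<in> \<real>"
proof -
  define v where "v = (\<lambda>c::nat. (\<chi> k::2. (if c = 0 \<and> k = 0 then x else 0) + (if c = 1 \<and> k = 1 then y else 0)))"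
  have "(\<Sum>a<2. \<Sum>b<2. \<Sum>i\<in>UNIV. \<Sum>j\<in>UNIV. cnj (v a $ i) * X a b $ i $ j * v b $ j) =
     cnj x * X 0 0 $0$0 * x + cnj x * X 0 1 $ 0 $ 1 * y + cnj y * X 1 0 $ 1 $ 0 * x + cnj y * X 1 1 $ 1 $ 1 * y"
    by (simp add: v_def sumlt2 sum2)
  then show ?thesis using pair_form_gen[OF bp, of v] by metis
qed


lemma L2:
  fixes A B C D :: complex
  assumes H: "\<And>x y. (cnj x * A * x + cnj x * B * y + cnj y * C * x + cnj y * D * y) \<in> \<real> \<and>
     Re (cnj x * A * x + cnj x * B * y + cnj y * C * x + cnj y * D * y) \<ge> 0"
    and A0: "A = 0"
  shows "B = 0 \<and> C = 0"
proof -
  have h1: "Im D = 0" "Re D \<ge> 0" using H[of 0 1] by (auto simp: complex_is_Real_iff)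
  have h2: "Im (B + C + D) = 0" using H[of 1 1] A0 by (auto simp: complex_is_Real_iff)
  have h3: "Im (-\<i>*B + \<i>*C + D) = 0" using H[of "\<i>" 1] A0 by (auto simp: complex_is_Real_iff)
  have C: "C = cnj B" using h1 h2 h3 by (simp add: complex_eq_iff)
  have B0: "B = 0"
  proof (rule ccontr)
    assume "B \<noteq> 0"
    then have p: "(Re B)^2 + (Im B)^2 > 0" by (simp add: complex_eq_iff sum_power2_gt_zero_iff)
    define m where "m = (Re B)^2 + (Im B)^2"
    define n where "n = (Re D + 1) / (2 * m)"
    have e: "cnj B * B = of_real m" unfolding m_def by (simp add: complex_eq_iff power2_eq_square)
    have "0 \<le> Re (cnj (- of_real n * B) * A * (- of_real n * B) + cnj (- of_real n * B) * B * 1 + cnj 1 * C * (- of_real n * B) + cnj 1 * D * 1)"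
      using H by blast
    also have "cnj (- of_real n * B) * A * (- of_real n * B) + cnj (- of_real n * B) * B * 1 + cnj 1 * C * (- of_real n * B) + cnj 1 * D * 1
       = D - 2 * of_real n * (cnj B * B)" using A0 C by (simp add: algebra_simps)
    also have "Re (D - 2 * of_real n * (cnj B * B)) = Re D - 2 * n * m" unfolding e by simp
    finally have "0 \<le> Re D - 2 * n * m" .
    moreover have p': "m > 0" using p m_def by simp
    moreover have "2 * n * m = Re D + 1" using p' unfolding n_def by (simp add: field_simps)
    ultimately show False by simp
  qed
  show ?thesis using B0 C by simp
qed



definition eu :: "nat \<Rightarrow> nat \<Rightarrow> op2" where
  "eu a b = (\<chi> i j. if i = of_nat a \<and> j = of_nat b then 1 else 0)"

lemma bp_eu: "block_positive 2 eu"
  unfolding block_positive_def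
proof
  fix v :: "nat \<Rightarrow> complex^2"
  have "(\<Sum>a<2. \<Sum>b<2. \<Sum>i\<in>UNIV. \<Sum>j\<in>UNIV. cnj (v a $ i) * eu a b $ i $ j * v b $ j)
     = cnj (v 0 $ 0 + v 1 $ 1) * (v 0 $ 0 + v 1 $ 1)"
    by (simp add: sumlt2 sum2 eu_def algebra_simps)
  also have "\<dots> = (v 0 $ 0 + v 1 $ 1) * cnj (v 0 $ 0 + v 1 $ 1)" by (simp add: mult.commute)
  also have "\<dots> = of_real ((Re (v 0 $ 0 + v 1 $ 1))^2 + (Im (v 0 $ 0 + v 1 $ 1))^2)"
    by (rule complex_mult_cnj)
  finally show "(\<Sum>a<2. \<Sum>b<2. \<Sum>i\<in>UNIV. \<Sum>j\<in>UNIV. cnj (v a $ i) * eu a b $ i $ j * v b $ j) \<in> \<real> \<and>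
        0 \<le> Re (\<Sum>a<2. \<Sum>b<2. \<Sum>i\<in>UNIV. \<Sum>j\<in>UNIV. cnj (v a $ i) * eu a b $ i $ j * v b $ j)"
    by simp
qed

definition dgm :: "(2 \<Rightarrow> complex) \<Rightarrow> op2" where
  "dgm k = (\<chi> i j. if i = j then k i else 0)"

lemma dgm_mult: "(dgm k ** X ** dgm k) $ i $ j = k i * X $ i $ j * k j"
  using ex2[of i] ex2[of j] by (elim disjE) (simp_all add: dgm_def matrix_matrix_mult_def sum2)

lemma cp_dgm:
  assumes real: "\<And>i. cnj (k i) = k i"
  shows "completely_positive (\<lambda>\<rho>. dgm k ** \<rho> ** dgm k)"
  unfolding completely_positive_def
proof
  show "clinear_map (\<lambda>\<rho>. dgm k ** \<rho> ** dgm k)"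
    unfolding clinear_map_def by (simp add: vec_eq_iff dgm_mult cscale_def algebra_simps)
  show "\<forall>n X. block_positive n X \<longrightarrow> block_positive n (\<lambda>a b. dgm k ** X a b ** dgm k)"
  proof (intro allI impI)
    fix n X assume bp: "block_positive n X"
    show "block_positive n (\<lambda>a b. dgm k ** X a b ** dgm k)"
      unfolding block_positive_def
    proof
      fix v :: "nat \<Rightarrow> complex^2"
      define w where "w = (\<lambda>a. \<chi> i. k i * v a $ i)"
      have "(\<Sum>a<n. \<Sum>b<n. \<Sum>i\<in>UNIV. \<Sum>j\<in>UNIV. cnj (v a $ i) * (dgm k ** X a b ** dgm k) $ i $ j * v b $ j)
        = (\<Sum>a<n. \<Sum>b<n. \<Sum>i\<in>UNIV. \<Sum>j\<in>UNIV. cnj (w a $ i) * X a b $ i $ j * w b $ j)"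
        unfolding dgm_mult w_def
        by (intro sum.cong refl) (simp add: real)
      then show "(\<Sum>a<n. \<Sum>b<n. \<Sum>i\<in>UNIV. \<Sum>j\<in>UNIV. cnj (v a $ i) * (dgm k ** X a b ** dgm k) $ i $ j * v b $ j) \<in> \<real> \<and>
         0 \<le> Re (\<Sum>a<n. \<Sum>b<n. \<Sum>i\<in>UNIV. \<Sum>j\<in>UNIV. cnj (v a $ i) * (dgm k ** X a b ** dgm k) $ i $ j * v b $ j)"
        using bp unfolding block_positive_def by metis
    qed
  qed
qed

lemma eu_decomp: "\<rho> = cscale (\<rho>$0$0) (eu 0 0) + cscale (\<rho>$0$1) (eu 0 1) + cscale (\<rho>$1$0) (eu 1 0) + cscale (\<rho>$1$1) (eu 1 1)"
  unfolding vec_eq_iff all2 by (simp add: cscale_def eu_def)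

lemma lin_ext:
  assumes "clinear_map Q" "clinear_map N" "\<And>a b i j. a < 2 \<Longrightarrow> b < 2 \<Longrightarrow> Q (eu a b) $ i $ j = N (eu a b) $ i $ j"
  shows "Q = N"
proof
  fix \<rho> :: op2
  have e: "Q (eu a b) = N (eu a b)" if "a < 2" "b < 2" for a b using assms(3)[OF that] by (simp add: vec_eq_iff)
  define D where "D = cscale (\<rho>$0$0) (eu 0 0) + cscale (\<rho>$0$1) (eu 0 1) + cscale (\<rho>$1$0) (eu 1 0) + cscale (\<rho>$1$1) (eu 1 1)"
  have r: "\<rho> = D" unfolding D_def by (rule eu_decomp)
  have "Q D = N D" unfolding D_def using assms(1,2) e by (simp add: clinear_map_def)
  then show "Q \<rho> = N \<rho>" using r by simp
qed

lemma conv0: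
  fixes q s :: complex and t :: real
  assumes "q \<in> \<real>" "Re q \<ge> 0" "s \<in> \<real>" "Re s \<ge> 0" "0 < t" "t < 1"
    and "of_real t * q + of_real (1 - t) * s = 0"
  shows "q = 0"
proof -
  have "Re (of_real t * q + of_real (1 - t) * s) = 0" using assms(7) by simp
  then have "t * Re q + (1 - t) * Re s = 0" by simp
  then have "t * Re q = 0" using assms by (smt (verit) mult_nonneg_nonneg)
  then have "Re q = 0" using assms by simp
  then show ?thesis using assms(1) by (simp add: complex_eq_iff complex_is_Real_iff)
qed


lemma pair_form:
  assumes bp: "block_positive 2 X" and ab: "a < 2" "b < 2" and ne: "(a,i) \<noteq> (b,j)"
  shows "(cnj x * X a a $i$i * x + cnj x * X a b $ i $ j * y + cnj y * X b a $ j $ i * x + cnj y * X b b $ j $ j * y) \<in> \<real>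
    \<and> Re (cnj x * X a a $i$i * x + cnj x * X a b $ i $ j * y + cnj y * X b a $ j $ i * x + cnj y * X b b $ j $ j * y) \<ge> 0"
proof -
  define v where "v = (\<lambda>c::nat. (\<chi> k::2. (if c = a \<and> k = i then x else 0) + (if c = b \<and> k = j then y else 0)))"
  have A: "a = 0 \<or> a = 1" "b = 0 \<or> b = 1" using ab by auto
  have "(\<Sum>a<2. \<Sum>b<2. \<Sum>i\<in>UNIV. \<Sum>j\<in>UNIV. cnj (v a $ i) * X a b $ i $ j * v b $ j) =
     cnj x * X a a $i$i * x + cnj x * X a b $ i $ j * y + cnj y * X b a $ j $ i * x + cnj y * X b b $ j $ j * y"
    using A ex2[of i] ex2[of j] ne
    by (elim disjE; simp add: v_def sumlt2 sum2)
  then show ?thesis using pair_form_gen[OF bp, of v] by metis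
qed



lemma cp_bp: "completely_positive Q \<Longrightarrow> block_positive 2 (\<lambda>a b. Q (eu a b))"
  using bp_eu unfolding completely_positive_def by blast

lemma pairQ:
  assumes "completely_positive Q" "a < 2" "b < 2" "(a,i) \<noteq> (b,j)"
  shows "(cnj x * Q (eu a a) $i$i * x + cnj x * Q (eu a b) $ i $ j * y + cnj y * Q (eu b a) $ j $ i * x + cnj y * Q (eu b b) $ j $ j * y) \<in> \<real>
    \<and> Re (cnj x * Q (eu a a) $i$i * x + cnj x * Q (eu a b) $ i $ j * y + cnj y * Q (eu b a) $ j $ i * x + cnj y * Q (eu b b) $ j $ j * y) \<ge> 0"
  using pair_form[OF cp_bp[OF assms(1)] assms(2-4)] by simp

lemma diagQ:
  assumes "completely_positive Q" "a < 2"
  shows "Q (eu a a) $ i $ i \<in> \<real> \<and> Re (Q (eu a a) $ i $ i) \<ge> 0"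
proof -
  have "(a,i) \<noteq> (a, i+1)" by simp
  from pairQ[OF assms(1,2,2) this, of 1 0] show ?thesis by simp
qed

lemma killQ:
  assumes "completely_positive Q" "a < 2" "b < 2" "Q (eu a a) $ i $ i = 0"
  shows "Q (eu a b) $ i $ j = 0 \<and> Q (eu b a) $ j $ i = 0"
proof (cases "(a,i) = (b,j)")
  case True then show ?thesis using assms(4) by auto
next
  case False
  show ?thesis by (rule L2[OF pairQ[OF assms(1-3) False] assms(4)])
qed



lemma pos_facts:
  assumes "positive_op B"
  shows "B$0$0 = of_real (Re (B$0$0)) \<and> Re (B$0$0) \<ge> 0 \<and> B$1$1 = of_real (Re (B$1$1)) \<and> Re (B$1$1) \<ge> 0 \<and> B$1$0 = cnj (B$0$1)"
proof -
  have q: "qform B x \<in> \<real> \<and> Re (qform B x) \<ge> 0" for x using assms unfolding positive_op_def by blast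
  have e0: "qform B (\<chi> k. if k = 0 then 1 else 0) = B$0$0" by (simp add: qform_def sum2)
  have e1: "qform B (\<chi> k. if k = 0 then 0 else 1) = B$1$1" by (simp add: qform_def sum2)
  have e2: "qform B (\<chi> k. 1) = B$0$0 + B$0$1 + B$1$0 + B$1$1" by (simp add: qform_def sum2)
  have e3: "qform B (\<chi> k. if k = 0 then 1 else \<i>) = B$0$0 + \<i> * B$0$1 - \<i> * B$1$0 + B$1$1" by (simp add: qform_def sum2 algebra_simps)
  have a: "Im (B$0$0) = 0" "Re (B$0$0) \<ge> 0" using q[of "\<chi> k. if k = 0 then 1 else 0"] e0 by (auto simp: complex_is_Real_iff)
  have b: "Im (B$1$1) = 0" "Re (B$1$1) \<ge> 0" using q[of "\<chi> k. if k = 0 then 0 else 1"] e1 by (auto simp: complex_is_Real_iff)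
  have c: "Im (B$0$0 + B$0$1 + B$1$0 + B$1$1) = 0" using q[of "\<chi> k. 1"] e2 by (auto simp: complex_is_Real_iff)
  have d: "Im (B$0$0 + \<i> * B$0$1 - \<i> * B$1$0 + B$1$1) = 0" using q[of "\<chi> k. if k = 0 then 1 else \<i>"] e3 by (auto simp: complex_is_Real_iff)
  show ?thesis using a b c d by (simp add: complex_eq_iff)
qed

lemma pos_dgm:
  assumes "\<And>i. d i \<ge> 0"
  shows "positive_op (dgm (\<lambda>i. of_real (d i)))"
  unfolding positive_op_def
proof
  fix x :: "complex^2"
  have "qform (dgm (\<lambda>i. of_real (d i))) x = of_real (d 0) * (x$0 * cnj (x$0)) + of_real (d 1) * (x$1 * cnj (x$1))"
    by (simp add: qform_def dgm_def sum2 algebra_simps)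
  also have "\<dots> = of_real (d 0 * ((Re (x$0))^2 + (Im (x$0))^2) + d 1 * ((Re (x$1))^2 + (Im (x$1))^2))"
    unfolding complex_mult_cnj by simp
  finally show "qform (dgm (\<lambda>i. of_real (d i))) x \<in> \<real> \<and> 0 \<le> Re (qform (dgm (\<lambda>i. of_real (d i))) x)"
    using assms by simp
qed

lemma mm2: "(A ** B) $ i $ j = A$i$0 * B$0$j + A$i$1 * B$1$j" for A B :: op2
  by (simp add: matrix_matrix_mult_def sum2)

definition rr :: real where "rr = sqrt (1/2)"
lemma rr: "rr * rr = 1/2" "rr \<ge> 0" "rr > 0" unfolding rr_def by (simp_all add: real_sqrt_mult[symmetric])

definition K1 :: op2 where "K1 = dgm (\<lambda>i. of_real (if i = 0 then rr else 0))"
definition K2 :: op2 where "K2 = dgm (\<lambda>i. of_real (if i = 0 then rr else 1))"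

lemma sqrt_unique:
  assumes "positive_op B" "B ** B = dgm (\<lambda>i. of_real (if i = 0 then 1/2 else e))" "e = 0 \<or> e = 1"
  shows "B = dgm (\<lambda>i. of_real (if i = 0 then rr else e))"
proof -
  obtain a d b where A: "B$0$0 = of_real a" "a \<ge> 0" "B$1$1 = of_real d" "d \<ge> 0" "B$1$0 = cnj b" "B$0$1 = b"
    using pos_facts[OF assms(1)] by blast
  have m00: "a*a + ((Re b)^2 + (Im b)^2) = 1/2"
  proof -
    have "(B**B)$0$0 = 1/2" using assms(2) by (simp add: dgm_def)
    then have "of_real (a*a) + b * cnj b = 1/2" unfolding mm2 A by (simp add: mult.commute)
    then show ?thesis unfolding complex_mult_cnj by (simp add: complex_eq_iff)
  qed
  have m11: "d*d + ((Re b)^2 + (Im b)^2) = e"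
  proof -
    have "(B**B)$1$1 = of_real e" using assms(2) by (simp add: dgm_def)
    then have "of_real (d*d) + b * cnj b = of_real e" unfolding mm2 A by (simp add: algebra_simps)
    then show ?thesis unfolding complex_mult_cnj by (simp add: complex_eq_iff)
  qed
  have m01: "b * of_real (a + d) = 0"
  proof -
    have "(B**B)$0$1 = 0" using assms(2) by (simp add: dgm_def)
    then show ?thesis unfolding mm2 A by (simp add: algebra_simps)
  qed
  have b0: "b = 0"
  proof (rule ccontr)
    assume "b \<noteq> 0"
    then have "of_real (a + d) = (0::complex)" using m01 by simp
    then have "a + d = 0" by (simp only: of_real_eq_0_iff)
    then have "a = 0" "d = 0" using A by auto
    then show False using m00 m11 assms(3) by auto
  qed
  have "a*a = 1/2" using m00 b0 by simp
  then have aa: "a = rr" using A(2) rr by (metis nle_le mult_mono mult_strict_mono not_less)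
  have "d*d = e" using m11 b0 by simp
  then have dd: "d = e"
  proof -
    assume h: "d*d = e"
    have "(d - e) * (d + e) = 0" using h assms(3) by (auto simp: algebra_simps)
    then show ?thesis using A(4) assms(3) by auto
  qed
  show ?thesis unfolding vec_eq_iff all2 using A aa dd b0 by (simp add: dgm_def)
qed



lemma tr2: "trace (M::op2) = M$0$0 + M$1$1" by (simp add: trace_def sum2)
lemma s12: "(\<Sum>i\<in>{1..2::nat}. f i) = f 1 + f 2"
proof -
  have "{1..2::nat} = {1,2}" by auto
  then show ?thesis by simp
qed

lemma zdiag:
  assumes "completely_positive Q" "completely_positive R" "0 < t" "t < 1" "a < 2"
    "n = of_real t * Q (eu a a) $ i $ i + of_real (1 - t) * R (eu a a) $ i $ i" "n = 0"
  shows "Q (eu a a) $ i $ i = 0"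
  using conv0[of "Q (eu a a) $ i $ i" "R (eu a a) $ i $ i" t] diagQ[OF assms(1,5)] diagQ[OF assms(2,5)] assms by auto

lemma killQ':
  assumes "completely_positive Q" "a < 2" "Q (eu a a) $ i $ i = 0"
  shows "\<forall>b<2. \<forall>j. Q (eu a b) $ i $ j = 0 \<and> Q (eu b a) $ j $ i = 0"
  using killQ[OF assms(1,2)] assms(3) by blast

lemma kerQ:
  assumes "completely_positive Q"
  shows "(cnj x * (Q (eu 0 0) $ 0 $ 0 - of_real rr * Q (eu 0 1) $ 0 $ 1 - of_real rr * Q (eu 1 0) $ 1 $ 0 + of_real rr * of_real rr * Q (eu 1 1) $ 1 $ 1) * x
     + cnj x * (Q (eu 0 1) $ 0 $ 1 - of_real rr * Q (eu 1 1) $ 1 $ 1) * y + cnj y * (Q (eu 1 0) $ 1 $ 0 - of_real rr * Q (eu 1 1) $ 1 $ 1) * x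
     + cnj y * Q (eu 1 1) $ 1 $ 1 * y) \<in> \<real> \<and>
   Re (cnj x * (Q (eu 0 0) $ 0 $ 0 - of_real rr * Q (eu 0 1) $ 0 $ 1 - of_real rr * Q (eu 1 0) $ 1 $ 0 + of_real rr * of_real rr * Q (eu 1 1) $ 1 $ 1) * x
     + cnj x * (Q (eu 0 1) $ 0 $ 1 - of_real rr * Q (eu 1 1) $ 1 $ 1) * y + cnj y * (Q (eu 1 0) $ 1 $ 0 - of_real rr * Q (eu 1 1) $ 1 $ 1) * x
     + cnj y * Q (eu 1 1) $ 1 $ 1 * y) \<ge> 0"
proof -
  have ne: "((0::nat), 0::2) \<noteq> (1, 1)" by simp
  have "(cnj x * Q (eu 0 0) $0$0 * x + cnj x * Q (eu 0 1) $ 0 $ 1 * (y - of_real rr * x) + cnj (y - of_real rr * x) * Q (eu 1 0) $ 1 $ 0 * x + cnj (y - of_real rr * x) * Q (eu 1 1) $ 1 $ 1 * (y - of_real rr * x))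
     = (cnj x * (Q (eu 0 0) $ 0 $ 0 - of_real rr * Q (eu 0 1) $ 0 $ 1 - of_real rr * Q (eu 1 0) $ 1 $ 0 + of_real rr * of_real rr * Q (eu 1 1) $ 1 $ 1) * x
     + cnj x * (Q (eu 0 1) $ 0 $ 1 - of_real rr * Q (eu 1 1) $ 1 $ 1) * y + cnj y * (Q (eu 1 0) $ 1 $ 0 - of_real rr * Q (eu 1 1) $ 1 $ 1) * x
     + cnj y * Q (eu 1 1) $ 1 $ 1 * y)"
    by (simp add: algebra_simps)
  then show ?thesis using pairQ[OF assms, of 0 1 0 1 x "y - of_real rr * x"] by simp
qed




lemma K1e: "(K1 ** eu a b ** K1) $ i $ j = (if i = 0 \<and> j = 0 \<and> a = 0 \<and> b = 0 then of_real (rr*rr) else 0)"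
  if "a < 2" "b < 2" for a b i j
  using that ex2[of i] ex2[of j] unfolding K1_def dgm_mult
  by (auto simp: eu_def less_2_cases_iff)

lemma K2e: "(K2 ** eu a b ** K2) $ i $ j = (if i = of_nat a \<and> j = of_nat b then (if a = 0 then of_real rr else 1) * (if b = 0 then of_real rr else 1) else 0)"
  if "a < 2" "b < 2" for a b i j
  using that ex2[of i] ex2[of j] unfolding K2_def dgm_mult
  by (auto simp: eu_def less_2_cases_iff)

lemma ext_one:
  assumes QI: "is_instrument 2 Q" and RI: "is_instrument 2 R" and t: "0 < t" "t < 1"
    and h1: "\<And>\<rho>. K1 ** \<rho> ** K1 = t *\<^sub>R Q 1 \<rho> + (1 - t) *\<^sub>R R 1 \<rho>"
    and h2: "\<And>\<rho>. K2 ** \<rho> ** K2 = t *\<^sub>R Q 2 \<rho> + (1 - t) *\<^sub>R R 2 \<rho>"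
  shows "Q 1 = (\<lambda>\<rho>. K1 ** \<rho> ** K1) \<and> Q 2 = (\<lambda>\<rho>. K2 ** \<rho> ** K2)"
proof -
  have cQ1: "completely_positive (Q 1)" and cQ2: "completely_positive (Q 2)"
    and cR1: "completely_positive (R 1)" and cR2: "completely_positive (R 2)"
    using QI RI unfolding is_instrument_def by auto
  have trQ: "\<And>\<rho>. trace (Q 1 \<rho> + Q 2 \<rho>) = trace \<rho>" proof -
    fix \<rho>
    have "\<forall>\<rho>. trace (\<Sum>i\<in>{1..2}. Q i \<rho>) = trace \<rho>" using QI unfolding is_instrument_def by blast
    then show "trace (Q 1 \<rho> + Q 2 \<rho>) = trace \<rho>" by (simp only: s12)
  qed
  have cv1: "(K1 ** eu a b ** K1)$i$j = of_real t * Q 1 (eu a b)$i$j + of_real (1-t) * R 1 (eu a b)$i$j" for a b i j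
  proof -
    have "(K1 ** eu a b ** K1)$i$j = (t *\<^sub>R Q 1 (eu a b) + (1 - t) *\<^sub>R R 1 (eu a b))$i$j" using h1 by simp
    then show ?thesis by (simp add: scaleR_conv_of_real[where 'a=complex])
  qed
  have cv2: "(K2 ** eu a b ** K2)$i$j = of_real t * Q 2 (eu a b)$i$j + of_real (1-t) * R 2 (eu a b)$i$j" for a b i j
  proof -
    have "(K2 ** eu a b ** K2)$i$j = (t *\<^sub>R Q 2 (eu a b) + (1 - t) *\<^sub>R R 2 (eu a b))$i$j" using h2 by simp
    then show ?thesis by (simp add: scaleR_conv_of_real[where 'a=complex])
  qed
  have dz1: "Q 1 (eu 0 0) $ 1 $ 1 = 0" by (rule zdiag[OF cQ1 cR1 t _ cv1]) (simp_all add: K1e)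
  have z1: "\<forall>b<2. \<forall>j. Q 1 (eu 0 b) $ 1 $ j = 0 \<and> Q 1 (eu b 0) $ j $ 1 = 0" by (rule killQ'[OF cQ1 _ dz1]) simp
  have dz2: "Q 1 (eu 1 1) $ 0 $ 0 = 0" by (rule zdiag[OF cQ1 cR1 t _ cv1]) (simp_all add: K1e)
  have z2: "\<forall>b<2. \<forall>j. Q 1 (eu 1 b) $ 0 $ j = 0 \<and> Q 1 (eu b 1) $ j $ 0 = 0" by (rule killQ'[OF cQ1 _ dz2]) simp
  have dz3: "Q 1 (eu 1 1) $ 1 $ 1 = 0" by (rule zdiag[OF cQ1 cR1 t _ cv1]) (simp_all add: K1e)
  have z3: "\<forall>b<2. \<forall>j. Q 1 (eu 1 b) $ 1 $ j = 0 \<and> Q 1 (eu b 1) $ j $ 1 = 0" by (rule killQ'[OF cQ1 _ dz3]) simp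
  have dz4: "Q 2 (eu 0 0) $ 1 $ 1 = 0" by (rule zdiag[OF cQ2 cR2 t _ cv2]) (simp_all add: K2e)
  have w1: "\<forall>b<2. \<forall>j. Q 2 (eu 0 b) $ 1 $ j = 0 \<and> Q 2 (eu b 0) $ j $ 1 = 0" by (rule killQ'[OF cQ2 _ dz4]) simp
  have dz5: "Q 2 (eu 1 1) $ 0 $ 0 = 0" by (rule zdiag[OF cQ2 cR2 t _ cv2]) (simp_all add: K2e)
  have w2: "\<forall>b<2. \<forall>j. Q 2 (eu 1 b) $ 0 $ j = 0 \<and> Q 2 (eu b 1) $ j $ 0 = 0" by (rule killQ'[OF cQ2 _ dz5]) simp
  have eps: "Q 2 (eu 1 1) $ 1 $ 1 = 1"
  proof -
    have "trace (Q 1 (eu 1 1) + Q 2 (eu 1 1)) = trace (eu 1 1)" by (rule trQ)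
    moreover have "trace (eu 1 1) = 1" by (simp add: tr2 eu_def)
    ultimately show ?thesis using z2[rule_format, of 1 0] z3[rule_format, of 1 1] w2[rule_format, of 1 0]
      by (simp add: tr2)
  qed
  define \<beta> where "\<beta> = Q 2 (eu 0 0) $ 0 $ 0"
  define \<gamma> where "\<gamma> = Q 2 (eu 0 1) $ 0 $ 1"
  define \<delta> where "\<delta> = Q 2 (eu 1 0) $ 1 $ 0"
  have kQ: "\<And>x y. (cnj x * (\<beta> - of_real rr * \<gamma> - of_real rr * \<delta> + of_real rr * of_real rr * 1) * x
     + cnj x * (\<gamma> - of_real rr * 1) * y + cnj y * (\<delta> - of_real rr * 1) * x
     + cnj y * 1 * y) \<in> \<real> \<and>
   Re (cnj x * (\<beta> - of_real rr * \<gamma> - of_real rr * \<delta> + of_real rr * of_real rr * 1) * x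
     + cnj x * (\<gamma> - of_real rr * 1) * y + cnj y * (\<delta> - of_real rr * 1) * x
     + cnj y * 1 * y) \<ge> 0"
    using kerQ[OF cQ2] unfolding \<beta>_def \<gamma>_def \<delta>_def eps by blast
  have AR: "(R 2 (eu 0 0) $ 0 $ 0 - of_real rr * R 2 (eu 0 1) $ 0 $ 1 - of_real rr * R 2 (eu 1 0) $ 1 $ 0 + of_real rr * of_real rr * R 2 (eu 1 1) $ 1 $ 1) \<in> \<real>
     \<and> Re (R 2 (eu 0 0) $ 0 $ 0 - of_real rr * R 2 (eu 0 1) $ 0 $ 1 - of_real rr * R 2 (eu 1 0) $ 1 $ 0 + of_real rr * of_real rr * R 2 (eu 1 1) $ 1 $ 1) \<ge> 0"
    using kerQ[OF cR2, of 1 0] by simp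
  have AQ: "(\<beta> - of_real rr * \<gamma> - of_real rr * \<delta> + of_real rr * of_real rr * 1) \<in> \<real>
     \<and> Re (\<beta> - of_real rr * \<gamma> - of_real rr * \<delta> + of_real rr * of_real rr * 1) \<ge> 0"
    using kQ[of 1 0] by simp
  have AN: "of_real t * (\<beta> - of_real rr * \<gamma> - of_real rr * \<delta> + of_real rr * of_real rr * 1)
     + of_real (1 - t) * (R 2 (eu 0 0) $ 0 $ 0 - of_real rr * R 2 (eu 0 1) $ 0 $ 1 - of_real rr * R 2 (eu 1 0) $ 1 $ 0 + of_real rr * of_real rr * R 2 (eu 1 1) $ 1 $ 1) = 0"
  proof -
    have e1: "of_real t * \<beta> + of_real (1-t) * R 2 (eu 0 0) $ 0 $ 0 = of_real rr * of_real rr"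
      using cv2[of 0 0 0 0] K2e[of 0 0 0 0] unfolding \<beta>_def by simp
    have e2: "of_real t * \<gamma> + of_real (1-t) * R 2 (eu 0 1) $ 0 $ 1 = of_real rr"
      using cv2[of 0 1 0 1] K2e[of 0 1 0 1] unfolding \<gamma>_def by simp
    have e3: "of_real t * \<delta> + of_real (1-t) * R 2 (eu 1 0) $ 1 $ 0 = of_real rr"
      using cv2[of 1 0 1 0] K2e[of 1 0 1 0] unfolding \<delta>_def by simp
    have e4: "of_real t * 1 + of_real (1-t) * R 2 (eu 1 1) $ 1 $ 1 = 1"
      using cv2[of 1 1 1 1] K2e[of 1 1 1 1] eps by simp
    have "of_real t * (\<beta> - of_real rr * \<gamma> - of_real rr * \<delta> + of_real rr * of_real rr * 1)
     + of_real (1 - t) * (R 2 (eu 0 0) $ 0 $ 0 - of_real rr * R 2 (eu 0 1) $ 0 $ 1 - of_real rr * R 2 (eu 1 0) $ 1 $ 0 + of_real rr * of_real rr * R 2 (eu 1 1) $ 1 $ 1)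
     = (of_real t * \<beta> + of_real (1-t) * R 2 (eu 0 0) $ 0 $ 0) - of_real rr * (of_real t * \<gamma> + of_real (1-t) * R 2 (eu 0 1) $ 0 $ 1)
       - of_real rr * (of_real t * \<delta> + of_real (1-t) * R 2 (eu 1 0) $ 1 $ 0) + of_real rr * of_real rr * (of_real t * 1 + of_real (1-t) * R 2 (eu 1 1) $ 1 $ 1)"
      by (simp add: algebra_simps)
    also have "\<dots> = 0" unfolding e1 e2 e3 e4 by simp
    finally show ?thesis .
  qed
  have A0: "\<beta> - of_real rr * \<gamma> - of_real rr * \<delta> + of_real rr * of_real rr * 1 = 0"
    using conv0[OF _ _ _ _ t AN] AQ AR by blast
  have gd: "\<gamma> - of_real rr * 1 = 0 \<and> \<delta> - of_real rr * 1 = 0" by (rule L2[OF kQ A0])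
  have bet: "\<beta> = of_real rr * of_real rr" using A0 gd by (simp add: algebra_simps)
  have half: "of_real rr * of_real rr = (1/2::complex)" using rr(1) by (metis of_real_divide of_real_mult of_real_1 of_real_numeral)
  have alpha: "Q 1 (eu 0 0) $ 0 $ 0 = of_real rr * of_real rr"
  proof -
    have "trace (Q 1 (eu 0 0) + Q 2 (eu 0 0)) = trace (eu 0 0)" by (rule trQ)
    moreover have "trace (eu 0 0) = 1" by (simp add: tr2 eu_def)
    ultimately have "Q 1 (eu 0 0) $ 0 $ 0 + \<beta> = 1" using z1[rule_format, of 0 1] w1[rule_format, of 0 1]
      unfolding \<beta>_def by (simp add: tr2)
    then have "Q 1 (eu 0 0) $ 0 $ 0 = 1 - \<beta>" by (simp add: eq_diff_eq)
    also have "\<dots> = 1/2" using bet half by simp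
    finally show ?thesis by (simp only: half)
  qed
  have E1: "Q 1 (eu a b) $ i $ j = (K1 ** eu a b ** K1) $ i $ j" if "a < 2" "b < 2" for a b i j
  proof -
    have "a = 0 \<or> a = 1" "b = 0 \<or> b = 1" using that by auto
    then show ?thesis using ex2[of i] ex2[of j]
      apply (elim disjE)
      by (simp_all add: K1e alpha[simplified] z1[rule_format, simplified] z2[rule_format, simplified] z3[rule_format, simplified])
  qed
  have E2: "Q 2 (eu a b) $ i $ j = (K2 ** eu a b ** K2) $ i $ j" if "a < 2" "b < 2" for a b i j
  proof -
    have "a = 0 \<or> a = 1" "b = 0 \<or> b = 1" using that by auto
    then show ?thesis using ex2[of i] ex2[of j] gd[simplified] bet[simplified] eps[simplified]
      apply (elim disjE)
      by (simp_all add: K2e w1[rule_format, simplified] w2[rule_format, simplified] \<beta>_def \<gamma>_def \<delta>_def)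
  qed
  have l1: "clinear_map (\<lambda>\<rho>. K1 ** \<rho> ** K1)" using cp_dgm[of "\<lambda>i. of_real (if i = 0 then rr else 0)"]
    unfolding K1_def completely_positive_def by simp
  have l2: "clinear_map (\<lambda>\<rho>. K2 ** \<rho> ** K2)" using cp_dgm[of "\<lambda>i. of_real (if i = 0 then rr else 1)"]
    unfolding K2_def completely_positive_def by simp
  have "Q 1 = (\<lambda>\<rho>. K1 ** \<rho> ** K1)"
    by (rule lin_ext) (use cQ1 l1 E1 completely_positive_def in auto)
  moreover have "Q 2 = (\<lambda>\<rho>. K2 ** \<rho> ** K2)"
    by (rule lin_ext) (use cQ2 l2 E2 completely_positive_def in auto)
  ultimately show ?thesis by simp
qed



lemma P1eq: "(1/2::real) *\<^sub>R ketbra 0 = dgm (\<lambda>i. of_real (if i = 0 then 1/2 else 0))"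
  unfolding vec_eq_iff all2 by (simp add: ketbra_def dgm_def scaleR_conv_of_real[where 'a=complex])
lemma P2eq: "(1/2::real) *\<^sub>R ketbra 0 + ketbra 1 = dgm (\<lambda>i. of_real (if i = 0 then 1/2 else 1))"
  unfolding vec_eq_iff all2 by (simp add: ketbra_def dgm_def scaleR_conv_of_real[where 'a=complex])

lemma half': "complex_of_real rr * complex_of_real rr = 1/2"
  using rr(1) by (metis of_real_divide of_real_mult of_real_1 of_real_numeral)

lemma sq1: "op_sqrt (dgm (\<lambda>i. of_real (if i = 0 then 1/2 else 0))) = K1"
  unfolding op_sqrt_def
proof (rule the_equality)
  show "positive_op K1 \<and> K1 ** K1 = dgm (\<lambda>i. of_real (if i = 0 then 1/2 else 0))"
    unfolding K1_def using pos_dgm[of "\<lambda>i. if i = 0 then rr else 0"] rr half'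
    by (auto simp: vec_eq_iff all2 mm2 dgm_def)
next
  fix B assume "positive_op B \<and> B ** B = dgm (\<lambda>i. of_real (if i = 0 then 1/2 else 0))"
  then show "B = K1" using sqrt_unique[of B 0] unfolding K1_def by simp
qed

lemma sq2: "op_sqrt (dgm (\<lambda>i. of_real (if i = 0 then 1/2 else 1))) = K2"
  unfolding op_sqrt_def
proof (rule the_equality)
  show "positive_op K2 \<and> K2 ** K2 = dgm (\<lambda>i. of_real (if i = 0 then 1/2 else 1))"
    unfolding K2_def using pos_dgm[of "\<lambda>i. if i = 0 then rr else 1"] rr half'
    by (auto simp: vec_eq_iff all2 mm2 dgm_def)
next
  fix B assume "positive_op B \<and> B ** B = dgm (\<lambda>i. of_real (if i = 0 then 1/2 else 1))"
  then show "B = K2" using sqrt_unique[of B 1] unfolding K2_def by simp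
qed

lemma cpK1: "completely_positive (\<lambda>\<rho>. K1 ** \<rho> ** K1)"
  unfolding K1_def by (rule cp_dgm) simp
lemma cpK2: "completely_positive (\<lambda>\<rho>. K2 ** \<rho> ** K2)"
  unfolding K2_def by (rule cp_dgm) simp

lemma set12: "i \<in> {1..2::nat} \<longleftrightarrow> i = 1 \<or> i = 2" by auto
lemma ball12: "(\<forall>i\<in>{1..2::nat}. Pr i) \<longleftrightarrow> Pr 1 \<and> Pr 2" unfolding set12 Ball_def by auto
lemma trK: "trace (K1 ** \<rho> ** K1 + K2 ** \<rho> ** K2) = trace \<rho>"
proof -
  have a: "(K1 ** \<rho> ** K1) $ 0 $ 0 = of_real rr * \<rho>$0$0 * of_real rr"
    unfolding K1_def dgm_mult by simp
  have b: "(K1 ** \<rho> ** K1) $ 1 $ 1 = 0"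
    unfolding K1_def dgm_mult by simp
  have c: "(K2 ** \<rho> ** K2) $ 0 $ 0 = of_real rr * \<rho>$0$0 * of_real rr"
    unfolding K2_def dgm_mult by simp
  have d: "(K2 ** \<rho> ** K2) $ 1 $ 1 = \<rho>$1$1"
    unfolding K2_def dgm_mult by simp
  have "trace (K1 ** \<rho> ** K1 + K2 ** \<rho> ** K2) = of_real rr * \<rho>$0$0 * of_real rr + of_real rr * \<rho>$0$0 * of_real rr + \<rho>$1$1"
    unfolding tr2 vector_add_component a b c d by simp
  also have "\<dots> = (of_real rr * of_real rr) * 2 * \<rho>$0$0 + \<rho>$1$1" by (simp add: algebra_simps)
  also have "\<dots> = trace \<rho>" unfolding half' tr2 by simp
  finally show ?thesis .
qed

lemma kb0: "ketbra 0 = dgm (\<lambda>i. of_real (if i = 0 then 1 else 0))"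
  unfolding vec_eq_iff all2 by (simp add: ketbra_def dgm_def)
lemma kb1: "ketbra 1 = dgm (\<lambda>i. of_real (if i = 0 then 0 else 1))"
  unfolding vec_eq_iff all2 by (simp add: ketbra_def dgm_def)
lemma mat1: "(mat 1 :: op2) = dgm (\<lambda>i. of_real 1)"
  unfolding vec_eq_iff all2 by (simp add: mat_def dgm_def)
lemma zer: "(0 :: op2) = dgm (\<lambda>i. of_real 0)"
  unfolding vec_eq_iff all2 by (simp add: dgm_def)
lemma kbsum: "ketbra 0 + ketbra 1 = (mat 1 :: op2)"
  unfolding vec_eq_iff all2 by (simp add: ketbra_def mat_def)

lemma not_ext_povm:
  assumes "P 1 = (1/2) *\<^sub>R ketbra 0"
    and "P 2 = (1/2) *\<^sub>R ketbra 0 + ketbra 1"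
  shows "\<not> extremal_povm 2 P"
proof
  assume E: "extremal_povm 2 P"
  define Q' :: "nat \<Rightarrow> op2" where "Q' = (\<lambda>i. if i = 1 then ketbra 0 else ketbra 1)"
  define R' :: "nat \<Rightarrow> op2" where "R' = (\<lambda>i. if i = 1 then 0 else mat 1)"
  have pk0: "positive_op (ketbra 0)" unfolding kb0 by (rule pos_dgm) simp
  have pk1: "positive_op (ketbra 1)" unfolding kb1 by (rule pos_dgm) simp
  have pm: "positive_op (mat 1 :: op2)" unfolding mat1 by (rule pos_dgm) simp
  have pz: "positive_op (0 :: op2)" unfolding zer by (rule pos_dgm) simp
  have qp: "is_povm 2 Q'" unfolding is_povm_def ball12 s12 Q'_def using pk0 pk1 kbsum by simp
  have rp: "is_povm 2 R'" unfolding is_povm_def ball12 s12 R'_def using pz pm by simp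
  have c1: "P 1 = (1/2::real) *\<^sub>R Q' 1 + (1 - 1/2) *\<^sub>R R' 1" unfolding Q'_def R'_def assms by simp
  have c2: "P 2 = (1/2::real) *\<^sub>R Q' 2 + (1 - 1/2) *\<^sub>R R' 2" unfolding Q'_def R'_def assms vec_eq_iff all2
    by (simp add: ketbra_def mat_def)
  have X: "is_povm 2 Q' \<and> is_povm 2 R' \<and> 0 < (1/2::real) \<and> (1/2::real) < 1 \<and> (\<forall>i\<in>{1..2}. P i = (1/2::real) *\<^sub>R Q' i + (1 - 1/2) *\<^sub>R R' i)"
    using qp rp c1 c2 unfolding ball12 by simp
  have "Q' 1 = P 1 \<and> R' 1 = P 1"
    using E[unfolded extremal_povm_def, THEN conjunct2, rule_format, of Q' R' "1/2", OF X, of 1] by simp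
  then have "ketbra 0 = (1/2::real) *\<^sub>R ketbra 0" unfolding Q'_def assms by simp
  then have "(ketbra 0 :: op2) $ 0 $ 0 = ((1/2::real) *\<^sub>R ketbra 0) $ 0 $ 0" by simp
  then show False by (simp add: ketbra_def scaleR_conv_of_real[where 'a=complex])
qed

theorem mainTheorem18:
  fixes P :: "nat \<Rightarrow> op2"
  assumes "P 1 = (1/2) *\<^sub>R ketbra 0"
    and "P 2 = (1/2) *\<^sub>R ketbra 0 + ketbra 1"
  shows "\<not> extremal_povm 2 P \<and>
         extremal_instrument 2 (\<lambda>i \<rho>. op_sqrt (P i) ** \<rho> ** op_sqrt (P i))"
proof
  show "\<not> extremal_povm 2 P" using not_ext_povm[OF assms] .
next
  have s1: "op_sqrt (P 1) = K1" using assms(1) P1eq sq1 by simp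
  have s2: "op_sqrt (P 2) = K2" using assms(2) P2eq sq2 by simp
  let ?N = "\<lambda>i \<rho>. op_sqrt (P i) ** \<rho> ** op_sqrt (P i)"
  have NI: "is_instrument 2 ?N"
    unfolding is_instrument_def ball12 s12 s1 s2 using cpK1 cpK2 trK by auto
  show "extremal_instrument 2 ?N"
    unfolding extremal_instrument_def
  proof (intro conjI NI allI impI)
    fix Q R t assume H: "is_instrument 2 Q \<and> is_instrument 2 R \<and> 0 < t \<and> t < 1 \<and>
        (\<forall>i\<in>{1..2}. ?N i = (\<lambda>\<rho>. t *\<^sub>R Q i \<rho> + (1 - t) *\<^sub>R R i \<rho>))"
    have H1: "?N 1 = (\<lambda>\<rho>. t *\<^sub>R Q 1 \<rho> + (1 - t) *\<^sub>R R 1 \<rho>)" and H2: "?N 2 = (\<lambda>\<rho>. t *\<^sub>R Q 2 \<rho> + (1 - t) *\<^sub>R R 2 \<rho>)"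
      using H unfolding ball12 by blast+
    have h1: "K1 ** \<rho> ** K1 = t *\<^sub>R Q 1 \<rho> + (1 - t) *\<^sub>R R 1 \<rho>" for \<rho>
      using fun_cong[OF H1, of \<rho>] unfolding s1 .
    have h2: "K2 ** \<rho> ** K2 = t *\<^sub>R Q 2 \<rho> + (1 - t) *\<^sub>R R 2 \<rho>" for \<rho>
      using fun_cong[OF H2, of \<rho>] unfolding s2 .
    have tt: "1 - (1 - t) = t" by simp
    have h1': "K1 ** \<rho> ** K1 = (1 - t) *\<^sub>R R 1 \<rho> + (1 - (1 - t)) *\<^sub>R Q 1 \<rho>" for \<rho>
      unfolding tt h1 by (rule add.commute)
    have h2': "K2 ** \<rho> ** K2 = (1 - t) *\<^sub>R R 2 \<rho> + (1 - (1 - t)) *\<^sub>R Q 2 \<rho>" for \<rho>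
      unfolding tt h2 by (rule add.commute)
    have QI: "is_instrument 2 Q" and RI: "is_instrument 2 R" and t0: "0 < 1 - t" and t1: "1 - t < 1"
      using H by auto
    have EQ: "Q 1 = (\<lambda>\<rho>. K1 ** \<rho> ** K1) \<and> Q 2 = (\<lambda>\<rho>. K2 ** \<rho> ** K2)"
      using ext_one[of Q R t, OF _ _ _ _ h1 h2] H by blast
    have ER: "R 1 = (\<lambda>\<rho>. K1 ** \<rho> ** K1) \<and> R 2 = (\<lambda>\<rho>. K2 ** \<rho> ** K2)"
      by (rule ext_one[OF RI QI t0 t1 h1' h2'])
    show "\<forall>i\<in>{1..2}. Q i = ?N i \<and> R i = ?N i"
      unfolding ball12 s1 s2 using EQ ER by simp
  qed
qed

end
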